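(* Let $(G_n)_{n\in\mathbb N}$ be an increasing sequence of subgroups of $\mathrm{Diff}^1_+([0,1])$ (i.e. $G_n\subset G_{n+1}$ for all $n$). Assume that every $G_n$ is finitely generated and $C^1$-close to the identity. Then $G=\bigcup_{n\in\mathbb N}G_n$ is $C^1$-close to the identity.
   Context: A group $G\subset \mathrm{Diff}^1_+([0,1])$ is $C^1$-close to the identity if there is a sequence $h_n\in \mathrm{Diff}^1_+([0,1])$ such that $h_n g h_n^{-1}\to \mathrm{id}$ in the $C^1$-topology as $n\to\infty$, for every $g\in G$. *)

theory Defs
  imports "HOL-Analysis.Analysis"
begin

text \<open>Convention: an element of Diff^1_+([0,1]) is represented as a function
  real => real that is the identity outside [0,1]; thus equality of such
  functions is equality on [0,1], composition is composition, and the group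
  inverse is the HOL inverse inv.\<close>

definition diff1p :: "(real \<Rightarrow> real) \<Rightarrow> bool" where
  "diff1p f \<longleftrightarrow>
     (\<forall>x. x \<notin> {0..1} \<longrightarrow> f x = x) \<and>
     bij_betw f {0..1} {0..1} \<and> strict_mono_on {0..1} f \<and>
     (\<exists>f'. continuous_on {0..1} f' \<and>
        (\<forall>x\<in>{0..1}. (f has_real_derivative f' x) (at x within {0..1}) \<and> f' x > 0))"

definition D01 :: "(real \<Rightarrow> real) \<Rightarrow> real \<Rightarrow> real" where
  "D01 f x = vector_derivative f (at x within {0..1})"

definition diff_subgroup :: "(real \<Rightarrow> real) set \<Rightarrow> bool" where
  "diff_subgroup G \<longleftrightarrow> G \<subseteq> Collect diff1p \<and> id \<in> G \<and>
     (\<forall>f\<in>G. \<forall>g\<in>G. f \<circ> g \<in> G) \<and> (\<forall>f\<in>G. inv f \<in> G)"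

definition generated_subgroup :: "(real \<Rightarrow> real) set \<Rightarrow> (real \<Rightarrow> real) set" where
  "generated_subgroup S = \<Inter>{H. diff_subgroup H \<and> S \<subseteq> H}"

definition fin_gen :: "(real \<Rightarrow> real) set \<Rightarrow> bool" where
  "fin_gen G \<longleftrightarrow> (\<exists>S. finite S \<and> S \<subseteq> G \<and> G = generated_subgroup S)"

definition C1_to_id :: "(nat \<Rightarrow> real \<Rightarrow> real) \<Rightarrow> bool" where
  "C1_to_id fs \<longleftrightarrow> uniform_limit {0..1} fs id sequentially \<and>
     uniform_limit {0..1} (\<lambda>n. D01 (fs n)) (\<lambda>x. 1) sequentially"

definition C1_close_id :: "(real \<Rightarrow> real) set \<Rightarrow> bool" where
  "C1_close_id G \<longleftrightarrow> (\<exists>h :: nat \<Rightarrow> real \<Rightarrow> real. (\<forall>n. diff1p (h n)) \<and>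
     (\<forall>g\<in>G. C1_to_id (\<lambda>n. h n \<circ> g \<circ> inv (h n))))"

end

theory Submission
  imports Defs
begin

lemma diff1p_bij:
  assumes "diff1p f" shows "bij f"
proof -
  have out: "\<And>x. x \<notin> {0..1} \<Longrightarrow> f x = x" and b: "bij_betw f {0..1} {0..1}"
    using assms unfolding diff1p_def by auto
  have "inj f"
  proof (rule injI)
    fix x y assume e: "f x = f y"
    show "x = y"
    proof (cases "x \<in> {0..1}"; cases "y \<in> {0..1}")
      assume "x \<in> {0..1}" "y \<in> {0..1}" thus ?thesis using e b by (auto simp: bij_betw_def inj_on_def)
    next
      assume "x \<in> {0..1}" "y \<notin> {0..1}" thus ?thesis using e b out[of y] by (metis bij_betwE)
    next
      assume "x \<notin> {0..1}" "y \<in> {0..1}" thus ?thesis using e b out[of x] by (metis bij_betwE)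
    next
      assume "x \<notin> {0..1}" "y \<notin> {0..1}" thus ?thesis using e out by metis
    qed
  qed
  moreover have "surj f"
  proof -
    { fix y :: real
      have "y \<in> range f"
      proof (cases "y \<in> {0..1}")
        case True
        then obtain x where "x \<in> {0..1}" "y = f x" using b by (metis bij_betw_imp_surj_on imageE)
        thus ?thesis by blast
      next
        case False thus ?thesis using out[of y] by (metis rangeI)
      qed }
    thus ?thesis by auto
  qed
  ultimately show ?thesis by (simp add: bij_def)
qed

fun ev :: "(bool \<times> (real \<Rightarrow> real)) list \<Rightarrow> real \<Rightarrow> real" where
  "ev [] = id"
| "ev ((b,f)#w) = (if b then f else inv f) \<circ> ev w"

lemma ev_append: "ev (xs @ ys) = ev xs \<circ> ev ys"
  by (induction xs rule: ev.induct) (auto simp: o_assoc)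

lemma ev_in:
  assumes "diff_subgroup G" "S \<subseteq> G" "w \<in> lists (UNIV \<times> S)"
  shows "ev w \<in> G"
  using assms(3)
proof (induction w rule: ev.induct)
  case 1 thus ?case using assms(1) unfolding diff_subgroup_def by (simp only: ev.simps)
next
  case (2 b f w)
  hence "f \<in> G" "ev w \<in> G" using assms by auto
  hence "(if b then f else inv f) \<in> G" using assms(1) unfolding diff_subgroup_def by auto
  thus ?case using \<open>ev w \<in> G\<close> assms(1) unfolding diff_subgroup_def by (simp only: ev.simps)
qed

lemma ev_inv:
  assumes "diff_subgroup G" "S \<subseteq> G" "w \<in> lists (UNIV \<times> S)"
  shows "inv (ev w) = ev (rev (map (\<lambda>(b,f). (\<not>b,f)) w))"
  using assms(3)
proof (induction w rule: ev.induct)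
  case 1 thus ?case by (simp add: inv_id)
next
  case (2 b f w)
  have fG: "f \<in> G" and wl: "w \<in> lists (UNIV \<times> S)" using 2 assms by auto
  have bf: "bij f" using fG assms(1) diff1p_bij unfolding diff_subgroup_def by auto
  have bw: "bij (ev w)" using ev_in[OF assms(1,2) wl] assms(1) diff1p_bij
    unfolding diff_subgroup_def by auto
  have bg: "bij (if b then f else inv f)" using bf bij_imp_bij_inv by auto
  have "inv ((if b then f else inv f) \<circ> ev w) = inv (ev w) \<circ> inv (if b then f else inv f)"
    using o_inv_distrib[OF bg bw] by simp
  also have "inv (if b then f else inv f) = (if \<not> b then f else inv f)"
    using bf by (auto simp: inv_inv_eq)
  finally show ?case using 2 wl by (simp add: ev_append)
qed

lemma fin_gen_countable:
  assumes G: "diff_subgroup G" and fg: "fin_gen G" shows "countable G"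
proof -
  obtain S where S: "finite S" "S \<subseteq> G" "G = generated_subgroup S"
    using fg unfolding fin_gen_def by auto
  define H where "H = ev ` lists (UNIV \<times> S)"
  have HG: "H \<subseteq> G" using ev_in[OF G S(2)] unfolding H_def by auto
  have "diff_subgroup H"
    unfolding diff_subgroup_def
  proof (intro conjI ballI)
    show "H \<subseteq> Collect diff1p" using HG G unfolding diff_subgroup_def by auto
    show "id \<in> H" unfolding H_def by (rule image_eqI[of _ _ "[]"]) auto
  next
    fix f g assume "f \<in> H" "g \<in> H"
    then obtain u v where "u \<in> lists (UNIV \<times> S)" "v \<in> lists (UNIV \<times> S)" "f = ev u" "g = ev v"
      unfolding H_def by auto
    thus "f \<circ> g \<in> H" unfolding H_def by (intro image_eqI[of _ _ "u @ v"]) (auto simp: ev_append)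
  next
    fix f assume "f \<in> H"
    then obtain u where u: "u \<in> lists (UNIV \<times> S)" "f = ev u" unfolding H_def by auto
    show "inv f \<in> H" unfolding H_def
      by (rule image_eqI[of _ _ "rev (map (\<lambda>(b,f). (\<not>b,f)) u)"])
         (use u ev_inv[OF G S(2) u(1)] in auto)
  qed
  moreover have "S \<subseteq> H" unfolding H_def
  proof
    fix f assume "f \<in> S"
    thus "f \<in> ev ` lists (UNIV \<times> S)" by (intro image_eqI[of _ _ "[(True,f)]"]) auto
  qed
  ultimately have "G \<subseteq> H" using S(3) unfolding generated_subgroup_def by auto
  moreover have "countable H" unfolding H_def using S(1) by (intro countable_image countable_lists countable_finite) auto
  ultimately show ?thesis using countable_subset by blast
qed

theorem theoremt:
  fixes Gs :: "nat \<Rightarrow> (real \<Rightarrow> real) set"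
  assumes "\<And>n. diff_subgroup (Gs n)"
    and "\<And>n. Gs n \<subseteq> Gs (Suc n)"
    and "\<And>n. fin_gen (Gs n)"
    and "\<And>n. C1_close_id (Gs n)"
  shows "C1_close_id (\<Union>n. Gs n)"
proof -
  define G where "G = (\<Union>n. Gs n)"
  have cG: "countable G" unfolding G_def using fin_gen_countable assms(1,3) by auto
  have neG: "G \<noteq> {}" unfolding G_def using assms(1)[of 0] by (auto simp: diff_subgroup_def)
  define e where "e = from_nat_into G"
  have rG: "range e = G" unfolding e_def using cG neG by simp
  have mono: "\<And>m k. m \<le> k \<Longrightarrow> Gs m \<subseteq> Gs k"
    using assms(2) by (metis lift_Suc_mono_le)
  define P where "P = (\<lambda>(k::nat) (h::real\<Rightarrow>real) (g::real\<Rightarrow>real). \<forall>x\<in>{0..1}. dist ((h \<circ> g \<circ> inv h) x) (id x) < 1/(real k+1)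
        \<and> dist (D01 (h \<circ> g \<circ> inv h) x) 1 < 1/(real k+1))"
  have ex: "\<exists>h. diff1p h \<and> (\<forall>g\<in>e ` {..k} \<inter> Gs k. P k h g)" for k
  proof -
    obtain hs where hs: "\<forall>n. diff1p (hs n)" "\<forall>g\<in>Gs k. C1_to_id (\<lambda>n. hs n \<circ> g \<circ> inv (hs n))"
      using assms(4)[of k] unfolding C1_close_id_def by auto
    have pos: "1/(real k+1) > 0" by simp
    have "\<forall>g\<in>e ` {..k} \<inter> Gs k. eventually (\<lambda>n. P k (hs n) g) sequentially"
    proof
      fix g assume "g \<in> e ` {..k} \<inter> Gs k"
      hence c: "C1_to_id (\<lambda>n. hs n \<circ> g \<circ> inv (hs n))" using hs by auto
      have c1: "uniform_limit {0..1} (\<lambda>n. hs n \<circ> g \<circ> inv (hs n)) id sequentially"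
        and c2: "uniform_limit {0..1} (\<lambda>n. D01 (hs n \<circ> g \<circ> inv (hs n))) (\<lambda>x. 1) sequentially"
        using c unfolding C1_to_id_def by auto
      have a: "\<forall>\<^sub>F n in sequentially. \<forall>x\<in>{0..1}. dist ((hs n \<circ> g \<circ> inv (hs n)) x) (id x) < 1/(real k+1)"
        using uniform_limitD[OF c1 pos] by simp
      have b: "\<forall>\<^sub>F n in sequentially. \<forall>x\<in>{0..1}. dist (D01 (hs n \<circ> g \<circ> inv (hs n)) x) 1 < 1/(real k+1)"
        using uniform_limitD[OF c2 pos] by simp
      show "eventually (\<lambda>n. P k (hs n) g) sequentially"
        using eventually_conj[OF a b] unfolding P_def by (auto elim: eventually_mono)
    qed
    hence "eventually (\<lambda>n. \<forall>g\<in>e ` {..k} \<inter> Gs k. P k (hs n) g) sequentially"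
      by (intro eventually_ball_finite) auto
    then obtain N where "\<forall>g\<in>e ` {..k} \<inter> Gs k. P k (hs N) g"
      unfolding eventually_sequentially by auto
    thus ?thesis using hs by blast
  qed
  then obtain H where H: "\<And>k. diff1p (H k)" "\<And>k. \<forall>g\<in>e ` {..k} \<inter> Gs k. P k (H k) g"
    by metis
  show ?thesis unfolding C1_close_id_def G_def[symmetric]
  proof (intro exI[of _ H] conjI allI ballI)
    show "diff1p (H n)" for n using H by auto
  next
    fix g assume "g \<in> G"
    then obtain i m where gi: "g = e i" and gm: "g \<in> Gs m" using rG unfolding G_def by (metis UN_E rangeE)
    have ev1: "\<forall>\<^sub>F k in sequentially. P k (H k) g"
    proof -
      have "\<forall>\<^sub>F k in sequentially. max i m \<le> k" by (rule eventually_ge_at_top)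
      thus ?thesis
      proof (rule eventually_mono)
        fix k assume "max i m \<le> k"
        hence "g \<in> e ` {..k} \<inter> Gs k" using gi gm mono[of m k] by auto
        thus "P k (H k) g" using H by auto
      qed
    qed
    have ev2: "\<forall>\<^sub>F k in sequentially. 1/(real k+1) < \<epsilon>" if "\<epsilon> > 0" for \<epsilon> :: real
    proof -
      obtain N :: nat where N: "1/\<epsilon> < N" using reals_Archimedean2 by blast
      show ?thesis unfolding eventually_sequentially
      proof (intro exI[of _ N] allI impI)
        fix k assume "N \<le> k"
        hence "1/\<epsilon> < real k + 1" using N by linarith
        thus "1/(real k+1) < \<epsilon>" using that
          by (metis add_pos_pos divide_less_eq mult.commute of_nat_0_le_iff
                     less_le_trans zero_less_one le_add_same_cancel2 not_less
                     less_divide_eq pos_divide_less_eq order.strict_trans1)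
      qed
    qed
    show "C1_to_id (\<lambda>n. H n \<circ> g \<circ> inv (H n))"
      unfolding C1_to_id_def
    proof (intro conjI uniform_limitI)
      fix \<epsilon> :: real assume "\<epsilon> > 0"
      show "\<forall>\<^sub>F n in sequentially. \<forall>x\<in>{0..1}. dist ((H n \<circ> g \<circ> inv (H n)) x) (id x) < \<epsilon>"
        using eventually_conj[OF ev1 ev2[OF \<open>\<epsilon>>0\<close>]] unfolding P_def
        by (auto elim!: eventually_mono)
      show "\<forall>\<^sub>F n in sequentially. \<forall>x\<in>{0..1}. dist (D01 (H n \<circ> g \<circ> inv (H n)) x) 1 < \<epsilon>"
        using eventually_conj[OF ev1 ev2[OF \<open>\<epsilon>>0\<close>]] unfolding P_def
        by (auto elim!: eventually_mono)
    qed
  qed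
qed

end
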